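(* Consider the Axelrod model with $F$ features and $q$ states on the path with vertex set $\{0,1,\dots,N\}$ (so $N$ edges), started with all initial features i.i.d. uniform on $\{1,\dots,q\}$, and the coupled urn process $(B_0(t),\dots,B_F(t))$ defined below. Then almost surely, for all $t\ge0$, $$B_0(t)\le w_0(t).$$
   Context: For an edge $e=\{x,y\}$, $\bar X_t(e)=\sum_{i=1}^F\mathbf 1\{X_t^i(x)=X_t^i(y)\}$, $w_j(t)=\#\{e:\bar X_t(e)=j\}$, and the total number of agreements is $W(t)=\sum_{j=0}^F j\,w_j(t)$. Axelrod dynamics: for each ordered pair $(x,y)$ of adjacent vertices with $X(x)\ne X(y)$, at rate $F(x,y)/2$ (with $F(x,y)=\bar X(\{x,y\})/F$) vertex $x$ copies from $y$ one feature chosen uniformly among those on which they differ; each such update changes $W$ by $0$, $1$ or $2$. Urn process: there are $F+1$ boxes labelled $0,\dots,F$ with $B_j(0)=w_j(0)$ balls in box $j$. At each time $t$ at which the Axelrod model is updated: if $W(t)-W(t-)\le1$, nothing is done; if $W(t)-W(t-)=2$, a box $j$ is chosen uniformly at random among the nonempty boxes with $1\le j\le F-1$ (if there is one) and one ball is moved from box $j$ to box $j+1$; in case a ball has been so moved, additionally one ball is moved from box $0$ to box $1$ if box $0$ is nonempty. The urn stops when the Axelrod model reaches an absorbing state. *)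

theory Defs
  imports Main
begin

text \<open>Axelrod model on the path with vertices 0..N (edges {v, v+1}, v < N).
  A configuration is X :: nat => nat => nat, X v i = value of feature i (i < F)
  at vertex v.  Urn state is B :: nat => nat, B j = number of balls in box j (j \<le> F).\<close>

definition agr :: "nat \<Rightarrow> (nat \<Rightarrow> nat \<Rightarrow> nat) \<Rightarrow> nat \<Rightarrow> nat \<Rightarrow> nat" where
  "agr F X x y = card {i. i < F \<and> X x i = X y i}"

definition wcount :: "nat \<Rightarrow> nat \<Rightarrow> (nat \<Rightarrow> nat \<Rightarrow> nat) \<Rightarrow> nat \<Rightarrow> nat" where
  "wcount F N X j = card {v. v < N \<and> agr F X v (Suc v) = j}"

definition Wtot :: "nat \<Rightarrow> nat \<Rightarrow> (nat \<Rightarrow> nat \<Rightarrow> nat) \<Rightarrow> nat" where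
  "Wtot F N X = (\<Sum>j\<le>F. j * wcount F N X j)"

definition adjacent :: "nat \<Rightarrow> nat \<Rightarrow> nat \<Rightarrow> bool" where
  "adjacent N x y \<longleftrightarrow> x \<le> N \<and> y \<le> N \<and> (y = Suc x \<or> x = Suc y)"

text \<open>One Axelrod update with positive rate: adjacent x, y with at least one
  agreement (rate F(x,y)/2 > 0) and a feature i on which they differ;
  x copies feature i from y.\<close>
definition axelrod_step :: "nat \<Rightarrow> nat \<Rightarrow> (nat \<Rightarrow> nat \<Rightarrow> nat) \<Rightarrow> (nat \<Rightarrow> nat \<Rightarrow> nat) \<Rightarrow> bool" where
  "axelrod_step F N X X' \<longleftrightarrow>
     (\<exists>x y i. adjacent N x y \<and> agr F X x y > 0 \<and> i < F \<and> X x i \<noteq> X y i \<and>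
              X' = X(x := (X x)(i := X y i)))"

text \<open>One urn move corresponding to an Axelrod update whose change of W is dW.\<close>
definition urn_step :: "nat \<Rightarrow> int \<Rightarrow> (nat \<Rightarrow> nat) \<Rightarrow> (nat \<Rightarrow> nat) \<Rightarrow> bool" where
  "urn_step F dW B B' \<longleftrightarrow>
     (if dW \<le> 1 then B' = B
      else if \<not> (\<exists>j. 1 \<le> j \<and> j \<le> F - 1 \<and> B j > 0) then B' = B
      else (\<exists>j. 1 \<le> j \<and> j \<le> F - 1 \<and> B j > 0 \<and>
              (let B1 = B(j := B j - 1, Suc j := B (Suc j) + 1) in
                 B' = (if B1 0 > 0 then B1(0 := B1 0 - 1, 1 := B1 1 + 1) else B1))))"

end

theory Submission
  imports Defs
begin

lemma sum_upd_nat: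
  assumes "finite A" "k \<in> A"
  shows "sum (f(k:=c)) A + f k = sum f A + (c::nat)"
proof -
  have "sum (f(k:=c)) A = c + sum (f(k:=c)) (A - {k})" using assms by (simp add: sum.remove)
  also have "sum (f(k:=c)) (A - {k}) = sum f (A - {k})" by (rule sum.cong) auto
  finally show ?thesis using assms by (simp add: sum.remove)
qed

lemma edge_lemma:
  fixes a a' :: "nat \<Rightarrow> nat"
  assumes e0: "e0 < N" "a e0 \<ge> 1" "a' e0 = Suc (a e0)" "e1 \<noteq> e0"
    and oth: "\<And>v. v \<noteq> e0 \<Longrightarrow> v \<noteq> e1 \<Longrightarrow> a' v = a v"
    and b1: "a' e1 \<le> Suc (a e1)" "a e1 \<le> Suc (a' e1)"
  shows "(\<Sum>v<N. a v) \<le> (\<Sum>v<N. a' v)"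
    and "card {v. v < N \<and> a v = 0} \<le> card {v. v < N \<and> a' v = 0} + 1"
    and "card {v. v < N \<and> a' v = 0} < card {v. v < N \<and> a v = 0} \<Longrightarrow>
          (\<Sum>v<N. a' v) = (\<Sum>v<N. a v) + 2"
proof -
  define R where "R = {..<N} - {e0, e1}"
  have fR: "finite R" unfolding R_def by simp
  have sR: "(\<Sum>v\<in>R. a' v) = (\<Sum>v\<in>R. a v)" by (rule sum.cong) (auto simp: R_def oth)
  have dec: "\<And>g::nat\<Rightarrow>nat. (\<Sum>v<N. g v) = g e0 + (if e1 < N then g e1 else 0) + (\<Sum>v\<in>R. g v)"
  proof -
    fix g :: "nat \<Rightarrow> nat"
    have "(\<Sum>v<N. g v) = g e0 + (\<Sum>v\<in>{..<N} - {e0}. g v)" using e0 by (simp add: sum.remove)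
    moreover have "(\<Sum>v\<in>{..<N} - {e0}. g v) = (if e1 < N then g e1 else 0) + (\<Sum>v\<in>R. g v)"
    proof (cases "e1 < N")
      case True
      then have "e1 \<in> {..<N} - {e0}" using e0 by auto
      then have "(\<Sum>v\<in>{..<N} - {e0}. g v) = g e1 + (\<Sum>v\<in>{..<N} - {e0} - {e1}. g v)"
        by (simp add: sum.remove)
      moreover have "{..<N} - {e0} - {e1} = R" unfolding R_def by auto
      ultimately show ?thesis using True by simp
    next
      case False
      then have "{..<N} - {e0} = R" unfolding R_def by auto
      then show ?thesis using False by simp
    qed
    ultimately show "(\<Sum>v<N. g v) = g e0 + (if e1 < N then g e1 else 0) + (\<Sum>v\<in>R. g v)" by simp
  qed
  have cdec: "\<And>g::nat\<Rightarrow>nat. g e0 \<noteq> 0 \<Longrightarrow> card {v. v < N \<and> g v = 0} =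
      card {v\<in>R. g v = 0} + (if e1 < N \<and> g e1 = 0 then 1 else 0)"
  proof -
    fix g :: "nat \<Rightarrow> nat" assume g0: "g e0 \<noteq> 0"
    show "card {v. v < N \<and> g v = 0} =
      card {v\<in>R. g v = 0} + (if e1 < N \<and> g e1 = 0 then 1 else 0)"
    proof (cases "e1 < N \<and> g e1 = 0")
      case True
      then have "{v. v < N \<and> g v = 0} = insert e1 {v\<in>R. g v = 0}" using g0 unfolding R_def by auto
      moreover have "e1 \<notin> {v\<in>R. g v = 0}" unfolding R_def by auto
      ultimately show ?thesis using True fR by simp
    next
      case False
      then have "{v. v < N \<and> g v = 0} = {v\<in>R. g v = 0}" using g0 unfolding R_def by auto
      then show ?thesis using False by simp
    qed
  qed
  have cR: "{v\<in>R. a' v = 0} = {v\<in>R. a v = 0}" using oth unfolding R_def by auto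
  have ca: "card {v. v < N \<and> a v = 0} = card {v\<in>R. a v = 0} + (if e1 < N \<and> a e1 = 0 then 1 else 0)"
    using cdec[of a] e0 by simp
  have ca': "card {v. v < N \<and> a' v = 0} = card {v\<in>R. a v = 0} + (if e1 < N \<and> a' e1 = 0 then 1 else 0)"
    using cdec[of a'] e0 cR by simp
  have sa: "(\<Sum>v<N. a v) = a e0 + (if e1 < N then a e1 else 0) + (\<Sum>v\<in>R. a v)" by (rule dec)
  have sa': "(\<Sum>v<N. a' v) = a' e0 + (if e1 < N then a' e1 else 0) + (\<Sum>v\<in>R. a v)"
    using dec[of a'] sR by simp
  show "(\<Sum>v<N. a v) \<le> (\<Sum>v<N. a' v)" using sa sa' e0 b1 by auto
  show "card {v. v < N \<and> a v = 0} \<le> card {v. v < N \<and> a' v = 0} + 1" using ca ca' by auto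
  show "card {v. v < N \<and> a' v = 0} < card {v. v < N \<and> a v = 0} \<Longrightarrow>
          (\<Sum>v<N. a' v) = (\<Sum>v<N. a v) + 2"
  proof -
    assume "card {v. v < N \<and> a' v = 0} < card {v. v < N \<and> a v = 0}"
    then have "e1 < N" "a e1 = 0" "a' e1 \<noteq> 0" using ca ca' by (auto split: if_splits)
    then show ?thesis using sa sa' e0 b1 by auto
  qed
qed

lemma agr_le: "agr F X u w \<le> F"
proof -
  have "{i. i < F \<and> X u i = X w i} \<subseteq> {..<F}" by auto
  then show ?thesis unfolding agr_def using card_mono[of "{..<F}"] by fastforce
qed

lemma wcount_Suc: "wcount F (Suc N) X j = wcount F N X j + (if agr F X N (Suc N) = j then 1 else 0)"
proof -
  have e: "{v. v < Suc N \<and> agr F X v (Suc v) = j} = {v. v < N \<and> agr F X v (Suc v) = j} \<union>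
     (if agr F X N (Suc N) = j then {N} else {})" using less_Suc_eq by auto
  have f: "finite {v. v < N \<and> agr F X v (Suc v) = j}" by simp
  show ?thesis unfolding wcount_def e using f by (auto simp: card_insert_if)
qed

lemma wcount_0N: "wcount F 0 X j = 0" unfolding wcount_def by simp

lemma Wtot_sum: "Wtot F N X = (\<Sum>v<N. agr F X v (Suc v))"
proof (induction N)
  case 0 then show ?case by (simp add: Wtot_def wcount_0N)
next
  case (Suc N)
  have "Wtot F (Suc N) X = (\<Sum>j\<le>F. j * wcount F N X j + (if agr F X N (Suc N) = j then j else 0))"
    unfolding Wtot_def wcount_Suc by (rule sum.cong) auto
  also have "\<dots> = Wtot F N X + agr F X N (Suc N)"
    using agr_le[of F X N "Suc N"] by (simp add: sum.distrib Wtot_def)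
  finally show ?case using Suc by simp
qed

lemma wcount_sum: "(\<Sum>j\<le>F. wcount F N X j) = N"
proof (induction N)
  case 0 then show ?case by (simp add: wcount_0N)
next
  case (Suc N)
  have "(\<Sum>j\<le>F. wcount F (Suc N) X j) = (\<Sum>j\<le>F. wcount F N X j + (if agr F X N (Suc N) = j then 1 else 0))"
    unfolding wcount_Suc by simp
  also have "\<dots> = N + 1"
    using agr_le[of F X N "Suc N"] Suc by (simp add: sum.distrib)
  finally show ?case by simp
qed

lemma W_bound:
  assumes "1 \<le> j0" "j0 < F" "wcount F N X j0 \<ge> 1"
  shows "Wtot F N X + 1 \<le> F * (N - wcount F N X 0)"
proof -
  let ?w = "wcount F N X"
  have "Wtot F N X + 1 \<le> (\<Sum>j\<le>F. j * ?w j) + ?w j0" using assms by (simp add: Wtot_def)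
  also have "\<dots> \<le> (\<Sum>j\<le>F. F * ?w j) - F * ?w 0"
  proof -
    have "(\<Sum>j\<le>F. j * ?w j) + ?w j0 \<le> (\<Sum>j\<le>F. j * ?w j + (if j = j0 then ?w j0 else 0))"
      using assms by (simp add: sum.distrib)
    also have "\<dots> \<le> (\<Sum>j\<le>F. (if j = 0 then 0 else F * ?w j))"
    proof (rule sum_mono)
      fix j assume j: "j \<in> {..F}"
      show "j * ?w j + (if j = j0 then ?w j0 else 0) \<le> (if j = 0 then 0 else F * ?w j)"
      proof (cases "j = j0")
        case True
        then have "Suc j \<le> F" using assms by simp
        then have "Suc j * ?w j \<le> F * ?w j" by (rule mult_right_mono) simp
        then show ?thesis using True assms by simp
      next
        case False
        then show ?thesis using j by (auto intro: mult_right_mono)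
      qed
    qed
    also have "\<dots> = (\<Sum>j\<le>F. F * ?w j) - F * ?w 0"
    proof -
      have "(\<Sum>j\<le>F. (if j = 0 then 0 else F * ?w j)) + F * ?w 0 = (\<Sum>j\<le>F. F * ?w j)"
        using sum_upd_nat[of "{..F}" 0 "\<lambda>j. F * ?w j" 0]
        by (simp add: fun_upd_def cong: if_cong)
      then show ?thesis by linarith
    qed
    finally show ?thesis .
  qed
  also have "\<dots> = F * (N - ?w 0)"
    by (simp add: sum_distrib_left[symmetric] wcount_sum right_diff_distrib')
  finally show ?thesis .
qed

lemma agr_sym: "agr F X u w = agr F X w u"
  unfolding agr_def by (metis)

lemma agr_other:
  assumes "u \<noteq> x" "w \<noteq> x"
  shows "agr F (X(x := g)) u w = agr F X u w"
  using assms unfolding agr_def by simp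

lemma card_close:
  assumes "S' - {i} = S - {i}" "finite S" "finite S'"
  shows "card S' \<le> Suc (card S)"
proof -
  have "card S' \<le> Suc (card (S' - {i}))"
    by (metis assms(3) card_Diff1_le card_Diff_singleton_if card.remove le_SucI order_refl)
  also have "card (S' - {i}) \<le> card S" using assms by (metis card_Diff1_le)
  finally show ?thesis by simp
qed

lemma agr_close:
  fixes X :: "nat \<Rightarrow> nat \<Rightarrow> nat"
  shows "agr F (X(x := (X x)(i := c))) u w \<le> Suc (agr F X u w)"
    and "agr F X u w \<le> Suc (agr F (X(x := (X x)(i := c))) u w)"
proof -
  let ?X' = "X(x := (X x)(i := c))"
  let ?S = "{k. k < F \<and> X u k = X w k}" and ?S' = "{k. k < F \<and> ?X' u k = ?X' w k}"
  have e: "?S' - {i} = ?S - {i}" by auto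
  show "agr F ?X' u w \<le> Suc (agr F X u w)" unfolding agr_def
    by (rule card_close[OF e]) auto
  show "agr F X u w \<le> Suc (agr F ?X' u w)" unfolding agr_def
    by (rule card_close[OF e[symmetric]]) auto
qed

lemma agr_xy:
  fixes X :: "nat \<Rightarrow> nat \<Rightarrow> nat"
  assumes "x \<noteq> y" "i < F" "X x i \<noteq> X y i"
  shows "agr F (X(x := (X x)(i := X y i))) x y = Suc (agr F X x y)"
proof -
  let ?X' = "X(x := (X x)(i := X y i))"
  have "{k. k < F \<and> ?X' x k = ?X' y k} = insert i {k. k < F \<and> X x k = X y k}"
    using assms by auto
  then show ?thesis unfolding agr_def using assms by simp
qed

lemma agr_lt:
  assumes "i < F" "X x i \<noteq> X y i"
  shows "agr F X x y < F"
proof -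
  have "{k. k < F \<and> X x k = X y k} \<subset> {..<F}" using assms by auto
  then show ?thesis unfolding agr_def by (metis card_lessThan finite_lessThan psubset_card_mono)
qed

lemma step_facts:
  assumes "axelrod_step F N X X'"
  shows "Wtot F N X \<le> Wtot F N X'"
    and "wcount F N X 0 \<le> wcount F N X' 0 + 1"
    and "wcount F N X' 0 < wcount F N X 0 \<Longrightarrow> Wtot F N X' = Wtot F N X + 2"
    and "\<exists>j0. 1 \<le> j0 \<and> j0 < F \<and> wcount F N X j0 \<ge> 1"
proof -
  obtain x y i where adj: "adjacent N x y" and pos: "agr F X x y > 0" and i: "i < F"
    and d: "X x i \<noteq> X y i" and X': "X' = X(x := (X x)(i := X y i))"
    using assms unfolding axelrod_step_def by blast
  define a where "a v = agr F X v (Suc v)" for v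
  define a' where "a' v = agr F X' v (Suc v)" for v
  define e0 where "e0 = min x y"
  define e1 where "e1 = (if y = Suc x then (if x = 0 then N else x - 1) else x)"
  have xy: "x \<noteq> y" using adj unfolding adjacent_def by auto
  have e0N: "e0 < N" using adj unfolding adjacent_def e0_def by auto
  have ae0: "a e0 = agr F X x y" unfolding a_def e0_def using adj unfolding adjacent_def
    by (auto simp: agr_sym)
  have ae0': "a' e0 = Suc (a e0)"
  proof -
    have "agr F X' x y = Suc (agr F X x y)" unfolding X' by (rule agr_xy[of x y i F X, OF xy i d])
    then show ?thesis unfolding a'_def e0_def using adj ae0 unfolding adjacent_def
      by (auto simp: agr_sym a_def)
  qed
  have e10: "e1 \<noteq> e0" using adj e0N unfolding e1_def e0_def adjacent_def by auto
  have oth: "a' v = a v" if "v \<noteq> e0" "v \<noteq> e1" for v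
  proof -
    have "v \<noteq> x" "Suc v \<noteq> x" using that adj unfolding e0_def e1_def adjacent_def by auto
    then show ?thesis unfolding a_def a'_def X' by (rule agr_other)
  qed
  have b1: "a' e1 \<le> Suc (a e1)" "a e1 \<le> Suc (a' e1)" unfolding a_def a'_def X'
    by (rule agr_close)+
  note E = edge_lemma[of e0 N a a' e1, OF e0N _ ae0' e10 oth b1]
  have p: "a e0 \<ge> 1" using pos ae0 by simp
  have W: "Wtot F N X = (\<Sum>v<N. a v)" "Wtot F N X' = (\<Sum>v<N. a' v)"
    unfolding a_def a'_def by (rule Wtot_sum)+
  have C: "wcount F N X 0 = card {v. v < N \<and> a v = 0}" "wcount F N X' 0 = card {v. v < N \<and> a' v = 0}"
    unfolding wcount_def a_def a'_def by simp_all
  show "Wtot F N X \<le> Wtot F N X'" using E(1)[OF p] W by simp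
  show "wcount F N X 0 \<le> wcount F N X' 0 + 1" using E(2)[OF p] C by simp
  show "wcount F N X' 0 < wcount F N X 0 \<Longrightarrow> Wtot F N X' = Wtot F N X + 2"
    using E(3)[OF p] C W by simp
  have lt: "a e0 < F" using agr_lt[of i F X x y, OF i d] ae0 by simp
  have "{v. v < N \<and> a v = a e0} \<noteq> {}" using e0N by auto
  then have "wcount F N X (a e0) \<ge> 1" unfolding wcount_def a_def[symmetric]
    by (simp add: Suc_le_eq card_gt_0_iff)
  then show "\<exists>j0. 1 \<le> j0 \<and> j0 < F \<and> wcount F N X j0 \<ge> 1" using p lt by blast
qed

lemma move_sum:
  assumes "finite A" "p \<in> A" "q \<in> A" "p \<noteq> q" "B p \<ge> (1::nat)"
  shows "(\<Sum>k\<in>A. c k * (B(p := B p - 1, q := B q + 1)) k) + c p = (\<Sum>k\<in>A. c k * B k) + (c q::nat)"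
proof -
  have f: "(\<lambda>k. c k * (B(p := B p - 1, q := B q + 1)) k) =
      ((\<lambda>k. c k * B k)(p := c p * (B p - 1)))(q := c q * (B q + 1))"
    using assms by (auto simp: fun_eq_iff)
  have 1: "(\<Sum>k\<in>A. (((\<lambda>k. c k * B k)(p := c p * (B p - 1)))(q := c q * (B q + 1))) k)
      + c q * B q = (\<Sum>k\<in>A. ((\<lambda>k. c k * B k)(p := c p * (B p - 1))) k) + c q * (B q + 1)"
    using sum_upd_nat[OF assms(1,3), of "(\<lambda>k. c k * B k)(p := c p * (B p - 1))" "c q * (B q + 1)"]
      assms by simp
  have 2: "(\<Sum>k\<in>A. ((\<lambda>k. c k * B k)(p := c p * (B p - 1))) k) + c p * B p
      = (\<Sum>k\<in>A. c k * B k) + c p * (B p - 1)"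
    using sum_upd_nat[OF assms(1,2), of "\<lambda>k. c k * B k" "c p * (B p - 1)"] by simp
  have 3: "c p * (B p - 1) + c p = c p * B p" using assms(5)
    by (metis Suc_diff_le diff_Suc_1 mult_Suc_right add.commute)
  show ?thesis unfolding f using 1 2 3 by (simp add: algebra_simps)
qed

definition Inv where
  "Inv F N X B \<longleftrightarrow> B 0 \<le> wcount F N X 0 \<and> (\<Sum>j\<le>F. B j) = N \<and> (\<Sum>j\<le>F. j * B j) \<le> Wtot F N X"

lemma sum_two:
  fixes F :: nat
  assumes "\<And>j. 0 < j \<Longrightarrow> j < F \<Longrightarrow> g j = (0::nat)" "F \<ge> 1"
  shows "(\<Sum>j\<le>F. g j) = g 0 + g F"
proof -
  have "(\<Sum>j\<le>F. g j) = (\<Sum>j\<in>{0,F}. g j)"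
  proof (rule sum.mono_neutral_right)
    show "finite {..F}" by simp
    show "{0, F} \<subseteq> {..F}" by auto
    show "\<forall>i\<in>{..F} - {0, F}. g i = 0"
      using assms by (metis Diff_iff atMost_iff insertCI le_neq_implies_less not_gr0)
  qed
  then show ?thesis using assms by simp
qed

lemma preserve:
  assumes I: "Inv F N X B" and st: "axelrod_step F N X X'"
    and u: "urn_step F (int (Wtot F N X') - int (Wtot F N X)) B B'"
  shows "Inv F N X' B'"
proof -
  note S = step_facts[OF st]
  obtain j0 where j0: "1 \<le> j0" "j0 < F" "wcount F N X j0 \<ge> 1" using S(4) by blast
  have I1: "B 0 \<le> wcount F N X 0" and I2: "(\<Sum>j\<le>F. B j) = N" and I3: "(\<Sum>j\<le>F. j * B j) \<le> Wtot F N X"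
    using I unfolding Inv_def by auto
  have box: "\<exists>j. 1 \<le> j \<and> j \<le> F - 1 \<and> B j > 0"
  proof (rule ccontr)
    assume "\<not> ?thesis"
    then have z: "\<And>j. 0 < j \<Longrightarrow> j < F \<Longrightarrow> B j = 0" by force
    have s1: "B 0 + B F = N" using sum_two[of F B] z j0 I2 by simp
    have s2: "F * B F \<le> Wtot F N X" using sum_two[of F "\<lambda>j. j * B j"] z j0 I3 by simp
    have "F * B F < F * (N - wcount F N X 0)" using s2 W_bound[OF j0] by linarith
    then have "B F < N - wcount F N X 0" using mult_less_cancel1 by blast
    then show False using s1 I1 by simp
  qed
  show ?thesis
  proof (cases "int (Wtot F N X') - int (Wtot F N X) \<le> 1")
    case True
    then have B': "B' = B" using u unfolding urn_step_def by simp
    have "\<not> wcount F N X' 0 < wcount F N X 0" using S(3) True by force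
    then show ?thesis using B' I1 I2 I3 S(1) unfolding Inv_def by simp
  next
    case False
    then obtain j where j: "1 \<le> j" "j \<le> F - 1" "B j > 0" and
      B': "B' = (let B1 = B(j := B j - 1, Suc j := B (Suc j) + 1) in
                 (if B1 0 > 0 then B1(0 := B1 0 - 1, 1 := B1 1 + 1) else B1))"
    proof -
      have nb: "\<not> \<not> (\<exists>j. 1 \<le> j \<and> j \<le> F - 1 \<and> B j > 0)" using box by simp
      have "\<exists>j. 1 \<le> j \<and> j \<le> F - 1 \<and> B j > 0 \<and>
              (let B1 = B(j := B j - 1, Suc j := B (Suc j) + 1) in
                 B' = (if B1 0 > 0 then B1(0 := B1 0 - 1, 1 := B1 1 + 1) else B1))"
        using u unfolding urn_step_def if_not_P[OF False] if_not_P[OF nb] .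
      then show ?thesis using that by (auto simp only: Let_def)
    qed
    define B1 where "B1 = B(j := B j - 1, Suc j := B (Suc j) + 1)"
    have jF: "j \<in> {..F}" "Suc j \<in> {..F}" using j j0 by auto
    have m1: "(\<Sum>k\<le>F. B1 k) = N"
      using move_sum[of "{..F}" j "Suc j" B "\<lambda>_. 1"] jF j I2 unfolding B1_def by simp
    have m2: "(\<Sum>k\<le>F. k * B1 k) \<le> Wtot F N X + 1"
      using move_sum[of "{..F}" j "Suc j" B "\<lambda>k. k"] jF j I3 unfolding B1_def by simp
    have B10: "B1 0 = B 0" unfolding B1_def using j by simp
    have dW: "Wtot F N X + 2 \<le> Wtot F N X'" using False by simp
    show ?thesis
    proof (cases "B1 0 > 0")
      case True
      then have BB: "B' = B1(0 := B1 0 - 1, 1 := B1 1 + 1)" using B' unfolding B1_def by (simp add: Let_def)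
      have z: "0 \<in> {..F}" "1 \<in> {..F}" using j0 by auto
      have n1: "(\<Sum>k\<le>F. B' k) = N"
        using move_sum[of "{..F}" 0 1 B1 "\<lambda>_. 1"] z True m1 unfolding BB by simp
      have n2: "(\<Sum>k\<le>F. k * B' k) \<le> Wtot F N X'"
        using move_sum[of "{..F}" 0 1 B1 "\<lambda>k. k"] z True m2 dW unfolding BB by simp
      have n0: "B' 0 \<le> wcount F N X' 0" using BB B10 I1 S(2) by simp
      show ?thesis using n0 n1 n2 unfolding Inv_def by simp
    next
      case False
      then have BB: "B' = B1" using B' unfolding B1_def by (simp add: Let_def)
      show ?thesis using BB m1 m2 dW False unfolding Inv_def by simp
    qed
  qed
qed

theorem lemma11:
  fixes F q N :: nat
    and X :: "nat \<Rightarrow> nat \<Rightarrow> nat \<Rightarrow> nat"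
    and B :: "nat \<Rightarrow> nat \<Rightarrow> nat"
    and n :: nat
  assumes "F \<ge> 1" and "q \<ge> 1" and "N \<ge> 1"
    and init: "\<forall>v\<le>N. \<forall>i<F. X 0 v i \<in> {1..q}"
    and urn_init: "\<forall>j\<le>F. B 0 j = wcount F N (X 0) j"
    and steps: "\<forall>m<n. axelrod_step F N (X m) (X (Suc m))"
    and urn: "\<forall>m<n. urn_step F (int (Wtot F N (X (Suc m))) - int (Wtot F N (X m)))
                                (B m) (B (Suc m))"
  shows "B n 0 \<le> wcount F N (X n) 0"
proof -
  have "\<forall>m\<le>n. Inv F N (X m) (B m)"
  proof (intro allI impI)
    fix m assume "m \<le> n"
    then show "Inv F N (X m) (B m)"
    proof (induction m)
      case 0
      have "(\<Sum>j\<le>F. B 0 j) = (\<Sum>j\<le>F. wcount F N (X 0) j)" using urn_init by simp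
      moreover have "(\<Sum>j\<le>F. j * B 0 j) = Wtot F N (X 0)" using urn_init by (simp add: Wtot_def)
      ultimately show ?case using urn_init assms(1) unfolding Inv_def by (simp add: wcount_sum)
    next
      case (Suc m)
      then have "m < n" by simp
      then show ?case using preserve[of F N "X m" "B m" "X (Suc m)" "B (Suc m)"] Suc steps urn by simp
    qed
  qed
  then show ?thesis unfolding Inv_def by simp
qed

end
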